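(* Let $E$ be a finite set and $\mathscr C$ a collection of nonempty, pairwise incomparable (under inclusion) subsets of $E$. Then $\mathscr C$ is the set of circuits of a matroid on $E$ if and only if $\mathscr C$ satisfies the following axiom (C3)$''$: whenever $C_1,C_2\in\mathscr C$ with $e_1\in C_1-C_2$, $e_2\in C_2-C_1$, $e\in C_1\cap C_2$, and $(C_1-e_1)\cup(C_2-e_2)$ contains no member of $\mathscr C$, there is $C_3\in\mathscr C$ with $\{e_1,e_2\}\subseteq C_3\subseteq (C_1\cup C_2)-e$. *)

theory Defs
  imports Main
begin

definition matroid :: "'a set \<Rightarrow> 'a set set \<Rightarrow> bool" where
  "matroid E \<I> \<longleftrightarrow>
     finite E \<and>
     (\<forall>X\<in>\<I>. X \<subseteq> E) \<and>
     {} \<in> \<I> \<and>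
     (\<forall>X Y. X \<in> \<I> \<longrightarrow> Y \<subseteq> X \<longrightarrow> Y \<in> \<I>) \<and>
     (\<forall>X Y. X \<in> \<I> \<longrightarrow> Y \<in> \<I> \<longrightarrow> card X < card Y \<longrightarrow>
        (\<exists>e \<in> Y - X. insert e X \<in> \<I>))"

definition circuits :: "'a set \<Rightarrow> 'a set set \<Rightarrow> 'a set set" where
  "circuits E \<I> = {C. C \<subseteq> E \<and> C \<notin> \<I> \<and> (\<forall>D. D \<subset> C \<longrightarrow> D \<in> \<I>)}"

definition C3pp :: "'a set set \<Rightarrow> bool" where
  "C3pp \<C> \<longleftrightarrow>
    (\<forall>C1\<in>\<C>. \<forall>C2\<in>\<C>. \<forall>e1 e2 e.
       e1 \<in> C1 - C2 \<longrightarrow> e2 \<in> C2 - C1 \<longrightarrow> e \<in> C1 \<inter> C2 \<longrightarrow>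
       \<not> (\<exists>C\<in>\<C>. C \<subseteq> (C1 - {e1}) \<union> (C2 - {e2})) \<longrightarrow>
       (\<exists>C3\<in>\<C>. {e1, e2} \<subseteq> C3 \<and> C3 \<subseteq> (C1 \<union> C2) - {e}))"

end

theory Submission
  imports Defs
begin

lemma m_fin: "matroid E I \<Longrightarrow> X \<subseteq> E \<Longrightarrow> finite X"
  unfolding matroid_def using finite_subset by auto

lemma m_her: "matroid E I \<Longrightarrow> X \<in> I \<Longrightarrow> Y \<subseteq> X \<Longrightarrow> Y \<in> I"
  unfolding matroid_def by (elim conjE) (rule mp, erule allE, erule allE, erule mp, assumption+)

lemma m_sub: "matroid E I \<Longrightarrow> X \<in> I \<Longrightarrow> X \<subseteq> E"
  unfolding matroid_def by auto

lemma m_aug: "matroid E I \<Longrightarrow> X \<in> I \<Longrightarrow> Y \<in> I \<Longrightarrow> card X < card Y \<Longrightarrow> \<exists>e\<in>Y - X. insert e X \<in> I"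
  unfolding matroid_def by (elim conjE) (erule allE[of _ X], erule allE[of _ Y], simp)

lemma dep_has_circuit:
  assumes m: "matroid E I" and "D \<subseteq> E" and "D \<notin> I"
  shows "\<exists>C\<in>circuits E I. C \<subseteq> D"
  using assms(2,3)
proof (induction "card D" arbitrary: D rule: less_induct)
  case less
  show ?case
  proof (cases "\<forall>D'. D' \<subset> D \<longrightarrow> D' \<in> I")
    case True
    then have "D \<in> circuits E I" using less.prems unfolding circuits_def by blast
    then show ?thesis by blast
  next
    case False
    then obtain D' where "D' \<subset> D" "D' \<notin> I" by blast
    moreover have "finite D" using m less.prems m_fin by blast
    ultimately have "card D' < card D" by (simp add: psubset_card_mono)
    from less.hyps[OF this] \<open>D' \<subset> D\<close> \<open>D' \<notin> I\<close> less.prems show ?thesis by blast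
  qed
qed

lemma ex_max:
  assumes m: "matroid E I" and S: "S \<subseteq> E" and B: "B \<in> I" "B \<subseteq> S"
  shows "\<exists>J. J \<in> I \<and> B \<subseteq> J \<and> J \<subseteq> S \<and> (\<forall>K. K \<in> I \<longrightarrow> B \<subseteq> K \<longrightarrow> K \<subseteq> S \<longrightarrow> card K \<le> card J)"
proof -
  have fS: "finite S" using m S m_fin by blast
  have "\<forall>K. (K \<in> I \<and> B \<subseteq> K \<and> K \<subseteq> S) \<longrightarrow> card K < card S + 1"
  proof (intro allI impI)
    fix K assume "K \<in> I \<and> B \<subseteq> K \<and> K \<subseteq> S"
    then have "card K \<le> card S" using fS by (simp add: card_mono)
    then show "card K < card S + 1" by simp
  qed
  from ex_has_greatest_nat[where P="\<lambda>K. K \<in> I \<and> B \<subseteq> K \<and> K \<subseteq> S" and f=card, OF _ this] B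
  have "\<exists>J. (J \<in> I \<and> B \<subseteq> J \<and> J \<subseteq> S) \<and>
    (\<forall>K. K \<in> I \<and> B \<subseteq> K \<and> K \<subseteq> S \<longrightarrow> card K \<le> card J)" by blast
  then obtain J where "J \<in> I \<and> B \<subseteq> J \<and> J \<subseteq> S"
    "\<forall>K. K \<in> I \<and> B \<subseteq> K \<and> K \<subseteq> S \<longrightarrow> card K \<le> card J" by auto
  then show ?thesis by auto
qed

lemma key:
  assumes m: "matroid E I" and X: "X \<in> I" and C1: "C1 \<in> circuits E I" and C3: "C3 \<in> circuits E I"
    and s1: "C1 \<subseteq> insert a X" and s3: "C3 \<subseteq> insert a X - {e}" and e: "e \<in> C1" "e \<noteq> a" and aE: "a \<in> E"
  shows False
proof -
  have XE: "X \<subseteq> E" using m X m_sub by blast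
  have C1E: "C1 \<subseteq> E" and C1n: "C1 \<notin> I" and C1p: "\<forall>D. D \<subset> C1 \<longrightarrow> D \<in> I"
    using C1 unfolding circuits_def by auto
  have C3n: "C3 \<notin> I" using C3 unfolding circuits_def by auto
  have aX: "a \<notin> X"
  proof
    assume "a \<in> X" then have "C1 \<subseteq> X" using s1 by auto
    then show False using m_her[OF m X] C1n by blast
  qed
  have eX: "e \<in> X" using s1 e by auto
  define A where "A = insert a X - {e}"
  have AE: "A \<subseteq> E" using XE aE unfolding A_def by auto
  have fX: "finite X" using m XE m_fin by blast
  have cA: "card A = card X" unfolding A_def using aX eX fX e by (simp add: card_insert_if)
  define B where "B = C1 - {e}"
  have BI: "B \<in> I" using C1p e unfolding B_def by blast
  have BA: "B \<subseteq> A" using s1 unfolding A_def B_def by auto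
  obtain J where J: "J \<in> I" "B \<subseteq> J" "J \<subseteq> A"
    and Jmax: "\<forall>K. K \<in> I \<longrightarrow> B \<subseteq> K \<longrightarrow> K \<subseteq> A \<longrightarrow> card K \<le> card J"
    using ex_max[OF m AE BI BA] by blast
  have "J \<noteq> A" using m_her[OF m, of A C3] s3 C3n J(1) unfolding A_def by blast
  then have "J \<subset> A" using J by blast
  moreover have "finite A" using AE m m_fin by blast
  ultimately have "card J < card X" using cA psubset_card_mono by metis
  then obtain x where x: "x \<in> X - J" "insert x J \<in> I" using m_aug[OF m J(1) X] by blast
  show False
  proof (cases "x = e")
    case True
    have "C1 \<subseteq> insert x J" using True J(2) unfolding B_def by auto
    then show False using m_her[OF m x(2)] C1n by blast
  next
    case False
    then have "x \<in> A" using x unfolding A_def by auto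
    then have "card (insert x J) \<le> card J" using Jmax x J by auto
    moreover have "finite J" using J(3) \<open>finite A\<close> finite_subset by blast
    ultimately show False using x by simp
  qed
qed


lemma fwd:
  assumes m: "matroid E I"
  shows "C3pp (circuits E I)"
  unfolding C3pp_def
proof (intro ballI allI impI)
  fix C1 C2 e1 e2 e
  assume C1: "C1 \<in> circuits E I" and C2: "C2 \<in> circuits E I"
    and e1: "e1 \<in> C1 - C2" and e2: "e2 \<in> C2 - C1" and e: "e \<in> C1 \<inter> C2"
    and no: "\<not> (\<exists>C\<in>circuits E I. C \<subseteq> C1 - {e1} \<union> (C2 - {e2}))"
  have C1E: "C1 \<subseteq> E" and C1n: "C1 \<notin> I" using C1 unfolding circuits_def by auto
  have C2E: "C2 \<subseteq> E" and C2n: "C2 \<notin> I" using C2 unfolding circuits_def by auto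
  define X where "X = C1 - {e1} \<union> (C2 - {e2})"
  define Y where "Y = (C1 \<union> C2) - {e}"
  define U where "U = C1 \<union> C2"
  have XE: "X \<subseteq> E" using C1E C2E unfolding X_def by auto
  have YE: "Y \<subseteq> E" using C1E C2E unfolding Y_def by auto
  have fU: "finite U" using m C1E C2E m_fin unfolding U_def by (meson le_sup_iff)
  have XI: "X \<in> I" using dep_has_circuit[OF m XE] no unfolding X_def by blast
  have Y1: "insert e Y = U" and Y2: "e \<notin> Y" using e unfolding Y_def U_def by auto
  have X1: "insert e1 (insert e2 X) = U" and X2: "e1 \<notin> X" "e2 \<notin> X" "e1 \<noteq> e2"
    using e1 e2 unfolding X_def U_def by auto
  have fY: "finite Y" and fX: "finite X" using fU Y1 X1 by (metis finite_insert)+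
  have "card U = card Y + 1" using Y1 Y2 fY by (metis card_insert_disjoint Suc_eq_plus1)
  moreover have "card U = card X + 2" using X2 fX by (simp add: X1[symmetric])
  ultimately have cXY: "card X < card Y" by simp
  have YnI: "Y \<notin> I"
  proof
    assume "Y \<in> I"
    then obtain y where y: "y \<in> Y - X" "insert y X \<in> I" using m_aug[OF m XI _ cXY] by blast
    have "y = e1 \<or> y = e2" using y(1) unfolding X_def Y_def by auto
    moreover have "C1 \<subseteq> insert e1 X" "C2 \<subseteq> insert e2 X" unfolding X_def by auto
    ultimately show False using m_her[OF m y(2)] C1n C2n by blast
  qed
  then obtain C3 where C3: "C3 \<in> circuits E I" "C3 \<subseteq> Y" using dep_has_circuit[OF m YE] by blast
  have nx: "\<not> C3 \<subseteq> X" using no C3 unfolding X_def by blast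
  have YX: "Y \<subseteq> insert e1 (insert e2 X)" unfolding Y_def X_def by auto
  have "e1 \<in> C3"
  proof (rule ccontr)
    assume "e1 \<notin> C3"
    then have "C3 \<subseteq> insert e2 X - {e}" using C3(2) YX Y2 by blast
    moreover have "C2 \<subseteq> insert e2 X" unfolding X_def by auto
    ultimately show False using key[OF m XI C2 C3(1)] e e2 e1 C2E by blast
  qed
  moreover have "e2 \<in> C3"
  proof (rule ccontr)
    assume "e2 \<notin> C3"
    then have "C3 \<subseteq> insert e1 X - {e}" using C3(2) YX Y2 by blast
    moreover have "C1 \<subseteq> insert e1 X" unfolding X_def by auto
    ultimately show False using key[OF m XI C1 C3(1)] e e2 e1 C1E by blast
  qed
  ultimately show "\<exists>C3\<in>circuits E I. {e1, e2} \<subseteq> C3 \<and> C3 \<subseteq> C1 \<union> C2 - {e}"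
    using C3 unfolding Y_def by blast
qed

lemma elim:
  assumes fE: "finite E" and sub: "\<forall>C\<in>\<C>. C \<subseteq> E"
    and inc: "\<forall>C1\<in>\<C>. \<forall>C2\<in>\<C>. C1 \<subseteq> C2 \<longrightarrow> C1 = C2" and c3: "C3pp \<C>"
  shows "C1 \<in> \<C> \<Longrightarrow> C2 \<in> \<C> \<Longrightarrow> C1 \<noteq> C2 \<Longrightarrow> e \<in> C1 \<Longrightarrow> e \<in> C2 \<Longrightarrow>
    \<exists>C\<in>\<C>. C \<subseteq> (C1 \<union> C2) - {e}"
proof (induction "card (C1 \<union> C2)" arbitrary: C1 C2 rule: less_induct)
  case less
  have n12: "\<not> C1 \<subseteq> C2" using inc less.prems(1,2,3) by metis
  have n21: "\<not> C2 \<subseteq> C1" using inc less.prems(1,2,3) by metis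
  obtain e1 where e1: "e1 \<in> C1 - C2" using n12 by blast
  obtain e2 where e2: "e2 \<in> C2 - C1" using n21 by blast
  show ?case
  proof (cases "\<exists>D\<in>\<C>. D \<subseteq> (C1 - {e1}) \<union> (C2 - {e2})")
    case True
    then obtain D where D: "D \<in> \<C>" "D \<subseteq> (C1 - {e1}) \<union> (C2 - {e2})" by blast
    show ?thesis
    proof (cases "e \<in> D")
      case False
      then show ?thesis using D by blast
    next
      case True
      have "D \<noteq> C1" using D e1 by blast
      have "D \<union> C1 \<subset> C1 \<union> C2" using D e1 e2 by blast
      moreover have "finite (C1 \<union> C2)" using fE sub less.prems(1,2)
        by (meson finite_Un finite_subset)
      ultimately have "card (D \<union> C1) < card (C1 \<union> C2)" by (simp add: psubset_card_mono)
      from less.hyps[OF this D(1) less.prems(1) \<open>D \<noteq> C1\<close> True less.prems(4)]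
      obtain C where "C \<in> \<C>" "C \<subseteq> D \<union> C1 - {e}" by blast
      then show ?thesis using D by blast
    qed
  next
    case False
    have "e \<in> C1 \<inter> C2" using less.prems(4,5) by blast
    from c3[unfolded C3pp_def, rule_format, OF less.prems(1,2) e1 e2 this False]
    show ?thesis by blast
  qed
qed

lemma aug:
  assumes E: "\<forall>C\<in>\<C>. C \<subseteq> E"
    and el: "\<And>C1 C2 e. C1 \<in> \<C> \<Longrightarrow> C2 \<in> \<C> \<Longrightarrow> C1 \<noteq> C2 \<Longrightarrow> e \<in> C1 \<Longrightarrow> e \<in> C2 \<Longrightarrow>
      \<exists>C\<in>\<C>. C \<subseteq> (C1 \<union> C2) - {e}"
    and fE: "finite E"
  shows "I1 \<subseteq> E \<Longrightarrow> (\<forall>C\<in>\<C>. \<not> C \<subseteq> I1) \<Longrightarrow> I2 \<subseteq> E \<Longrightarrow> (\<forall>C\<in>\<C>. \<not> C \<subseteq> I2) \<Longrightarrow>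
    card I1 < card I2 \<Longrightarrow> \<exists>x\<in>I2 - I1. insert x I1 \<subseteq> E \<and> (\<forall>C\<in>\<C>. \<not> C \<subseteq> insert x I1)"
proof (induction "card (I1 - I2)" arbitrary: I2 rule: less_induct)
  case less
  have f1: "finite I1" using less.prems(1) fE by (rule finite_subset)
  have f2: "finite I2" using less.prems(3) fE by (rule finite_subset)
  have "\<not> I2 \<subseteq> I1"
  proof
    assume "I2 \<subseteq> I1"
    then have "card I2 \<le> card I1" using f1 by (rule card_mono[rotated])
    then show False using less.prems(5) by simp
  qed
  then obtain f0 where f0: "f0 \<in> I2 - I1" by blast
  show ?case
  proof (cases "I1 \<subseteq> I2")
    case True
    have "insert f0 I1 \<subseteq> I2" using True f0 by blast
    then have "insert f0 I1 \<subseteq> E" "\<forall>C\<in>\<C>. \<not> C \<subseteq> insert f0 I1"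
      using less.prems(3,4) by auto
    then show ?thesis using f0 by blast
  next
    case False
    then obtain e where e: "e \<in> I1" "e \<notin> I2" by blast
    define T where "T f = insert e (I2 - {f})" for f
    show ?thesis
    proof (cases "\<exists>f\<in>I2 - I1. \<forall>C\<in>\<C>. \<not> C \<subseteq> T f")
      case True
      then obtain f where f: "f \<in> I2 - I1" "\<forall>C\<in>\<C>. \<not> C \<subseteq> T f" by blast
      have TE: "T f \<subseteq> E" using e less.prems(1,3) unfolding T_def by auto
      have "I1 - T f = (I1 - I2) - {e}" using f e unfolding T_def by auto
      moreover have "card ((I1 - I2) - {e}) < card (I1 - I2)"
        by (rule card_Diff1_less) (use e f1 in auto)
      ultimately have "card (I1 - T f) < card (I1 - I2)" by simp
      moreover have "card (T f) = card I2"
      proof -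
        have "card I2 > 0" using f f2 card_gt_0_iff by blast
        then show ?thesis using f e f2 unfolding T_def by (simp add: card_insert_if)
      qed
      then have "card I1 < card (T f)" using less.prems(5) by simp
      ultimately obtain x where x: "x \<in> T f - I1" "insert x I1 \<subseteq> E \<and> (\<forall>C\<in>\<C>. \<not> C \<subseteq> insert x I1)"
        using less.hyps[OF _ less.prems(1,2) TE f(2)] by blast
      have "x \<in> I2 - I1" using x(1) e unfolding T_def by auto
      then show ?thesis using x by blast
    next
      case False
      have CT: "\<exists>C\<in>\<C>. C \<subseteq> T f \<and> e \<in> C \<and> f \<notin> C" if "f \<in> I2 - I1" for f
      proof -
        have "\<not> (\<forall>C\<in>\<C>. \<not> C \<subseteq> T f)" using False that by metis
        then obtain C where C: "C \<in> \<C>" "C \<subseteq> T f" by blast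
        have "e \<in> C"
        proof (rule ccontr)
          assume "e \<notin> C"
          then have "C \<subseteq> I2" using C(2) unfolding T_def by blast
          then show False using C(1) less.prems(4) by blast
        qed
        moreover have "f \<notin> C" using C that e unfolding T_def by auto
        ultimately show ?thesis using C by blast
      qed
      obtain Cf where Cf: "Cf \<in> \<C>" "Cf \<subseteq> T f0" "e \<in> Cf" "f0 \<notin> Cf" using CT[OF f0] by blast
      obtain g where g: "g \<in> Cf" "g \<notin> I1" using Cf(1) less.prems(2) by blast
      have gI: "g \<in> I2 - I1" using g Cf(2) e unfolding T_def by auto
      obtain Cg where Cg: "Cg \<in> \<C>" "Cg \<subseteq> T g" "e \<in> Cg" "g \<notin> Cg" using CT[OF gI] by blast
      have "Cf \<noteq> Cg" using g Cg by blast
      then obtain C where C: "C \<in> \<C>" "C \<subseteq> (Cf \<union> Cg) - {e}" using el[OF Cf(1) Cg(1)] Cf Cg by blast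
      have "C \<subseteq> I2" using C Cf(2) Cg(2) unfolding T_def by blast
      then show ?thesis using C less.prems(4) by blast
    qed
  qed
qed

theorem theorem5p2:
  fixes E :: "'a set" and \<C> :: "'a set set"
  assumes "finite E"
    and "\<forall>C\<in>\<C>. C \<subseteq> E"
    and "\<forall>C\<in>\<C>. C \<noteq> {}"
    and "\<forall>C1\<in>\<C>. \<forall>C2\<in>\<C>. C1 \<subseteq> C2 \<longrightarrow> C1 = C2"
  shows "(\<exists>\<I>. matroid E \<I> \<and> circuits E \<I> = \<C>) \<longleftrightarrow> C3pp \<C>"
proof
  assume "\<exists>\<I>. matroid E \<I> \<and> circuits E \<I> = \<C>"
  then obtain I where I: "matroid E I" "circuits E I = \<C>" by blast
  show "C3pp \<C>" using fwd[OF I(1)] unfolding I(2) .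
next
  assume c3: "C3pp \<C>"
  define I where "I = {X. X \<subseteq> E \<and> (\<forall>C\<in>\<C>. \<not> C \<subseteq> X)}"
  have el: "\<And>C1 C2 e. C1 \<in> \<C> \<Longrightarrow> C2 \<in> \<C> \<Longrightarrow> C1 \<noteq> C2 \<Longrightarrow> e \<in> C1 \<Longrightarrow> e \<in> C2 \<Longrightarrow>
      \<exists>C\<in>\<C>. C \<subseteq> (C1 \<union> C2) - {e}"
    by (rule elim[OF assms(1,2,4) c3])
  have "matroid E I"
    unfolding matroid_def
  proof (intro conjI allI impI)
    show "finite E" by fact
    show "\<forall>X\<in>I. X \<subseteq> E" unfolding I_def by simp
    show "{} \<in> I" using assms(3) unfolding I_def by auto
    show "Y \<in> I" if "X \<in> I" "Y \<subseteq> X" for X Y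
    proof -
      have "X \<subseteq> E" "\<forall>C\<in>\<C>. \<not> C \<subseteq> X" using that(1) unfolding I_def by auto
      then have "Y \<subseteq> E" "\<forall>C\<in>\<C>. \<not> C \<subseteq> Y" using that(2) by auto
      then show ?thesis unfolding I_def by simp
    qed
    show "\<exists>e\<in>Y - X. insert e X \<in> I" if "X \<in> I" "Y \<in> I" "card X < card Y" for X Y
    proof -
      note XY = that
      have "X \<subseteq> E" "\<forall>C\<in>\<C>. \<not> C \<subseteq> X" using that(1) unfolding I_def by auto
      moreover have "Y \<subseteq> E" "\<forall>C\<in>\<C>. \<not> C \<subseteq> Y" using that(2) unfolding I_def by auto
      ultimately obtain x where "x \<in> Y - X" "insert x X \<subseteq> E" "\<forall>C\<in>\<C>. \<not> C \<subseteq> insert x X"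
        using aug[OF assms(2) el assms(1), of X Y] XY(3) by blast
      then show ?thesis unfolding I_def by auto
    qed
  qed
  moreover have "circuits E I = \<C>"
  proof
    show "circuits E I \<subseteq> \<C>"
    proof
      fix C assume C: "C \<in> circuits E I"
      then have CE: "C \<subseteq> E" and CI: "C \<notin> I" and Cp: "\<forall>D. D \<subset> C \<longrightarrow> D \<in> I"
        unfolding circuits_def by auto
      from CE CI obtain C' where C': "C' \<in> \<C>" "C' \<subseteq> C" unfolding I_def by auto
      have "\<not> C' \<subset> C"
      proof
        assume "C' \<subset> C"
        then have "C' \<in> I" using Cp by simp
        then show False using C'(1) unfolding I_def by auto
      qed
      then have "C' = C" using C'(2) by simp
      then show "C \<in> \<C>" using C'(1) by simp
    qed
    show "\<C> \<subseteq> circuits E I"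
    proof
      fix C assume C: "C \<in> \<C>"
      have CE: "C \<subseteq> E" using C assms(2) by simp
      have "D \<in> I" if D: "D \<subset> C" for D
      proof -
        have "\<not> C' \<subseteq> D" if "C' \<in> \<C>" for C'
        proof
          assume "C' \<subseteq> D"
          then have "C' \<subseteq> C" using D by simp
          then have "C' = C" using assms(4) that C by simp
          then show False using \<open>C' \<subseteq> D\<close> D by simp
        qed
        moreover have "D \<subseteq> E" using D CE by simp
        ultimately show ?thesis unfolding I_def by simp
      qed
      moreover have "C \<notin> I" using C unfolding I_def by blast
      ultimately show "C \<in> circuits E I" using CE unfolding circuits_def by simp
    qed
  qed
  ultimately show "\<exists>\<I>. matroid E \<I> \<and> circuits E \<I> = \<C>" by blast
qed

end
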